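(* Let $X$ be a complex Banach space, $\mathcal{F}$ an algebra with unit, $\mathcal{E}\subseteq\mathcal{F}$ a (not necessarily unital) subalgebra, and $\Phi:\mathcal{E}\to\mathcal{L}(X)$ an algebra homomorphism such that $\mathcal{F}$ is anchored in $\mathcal{E}$. Then there is a unique calculus $\widehat{\Phi}:\mathcal{F}\to\mathcal{C}(X)$ such that $\widehat{\Phi}|_{\mathcal{E}}=\Phi$.
   Context: $\mathcal{F}$ need not be commutative. $\mathcal{L}(X)$, $\mathcal{C}(X)$: bounded, resp. closed linear operators on $X$; operator inclusions are graph inclusions, sums/products have natural domains, "$Tx=y$" means $x\in\mathrm{dom}(T)$, $Tx=y$. For $f\in\mathcal{F}$, $[f]_{\mathcal{E}}=\{e\in\mathcal{E}: ef\in\mathcal{E}\}$; $f$ is anchored in $\mathcal{E}$ (w.r.t. $\Phi$) if $[f]_{\mathcal{E}}\neq\emptyset$ and $\bigcap_{e\in[f]_{\mathcal{E}}}\ker\Phi(e)=\{0\}$; $\mathcal{F}$ is anchored in $\mathcal{E}$ if every $f\in\mathcal{F}$ is. A proto-calculus is a map $\Psi:\mathcal{F}\to\mathcal{C}(X)$ with (FC1) $\Psi(\mathbf{1})=I$; (FC2) $\lambda\Psi(f)\subseteq\Psi(\lambda f)$, $\Psi(f)+\Psi(g)\subseteq\Psi(f+g)$; (FC3) $\Psi(f)\Psi(g)\subseteq\Psi(fg)$ with $\mathrm{dom}(\Psi(f)\Psi(g))=\mathrm{dom}(\Psi(g))\cap\mathrm{dom}(\Psi(fg))$. It is a calculus if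 in addition, with $\mathrm{bdd}=\{g:\Psi(g)\in\mathcal{L}(X)\}$ and $\mathrm{reg}(f,\Psi)=\{e: e,ef\in\mathrm{bdd}\}$, for every $f\in\mathcal{F}$ and $x,y\in X$: $\Psi(f)x=y\iff\Psi(ef)x=\Psi(e)y$ for all $e\in\mathrm{reg}(f,\Psi)$. *)

theory Defs
  imports "HOL-Analysis.Analysis"
begin

definition complex_banach :: "(complex \<Rightarrow> 'x::banach \<Rightarrow> 'x) \<Rightarrow> bool" where
  "complex_banach sm \<longleftrightarrow>
     (\<forall>r x. sm (complex_of_real r) x = r *\<^sub>R x) \<and>
     (\<forall>a b x. sm (a * b) x = sm a (sm b x)) \<and>
     (\<forall>a b x. sm (a + b) x = sm a x + sm b x) \<and>
     (\<forall>a x y. sm a (x + y) = sm a x + sm a y) \<and>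
     (\<forall>a x. norm (sm a x) = cmod a * norm x)"

definition complex_algebra :: "(complex \<Rightarrow> 'f::{ring,monoid_mult} \<Rightarrow> 'f) \<Rightarrow> bool" where
  "complex_algebra sm \<longleftrightarrow>
     (\<forall>f. sm 1 f = f) \<and>
     (\<forall>a b f. sm (a * b) f = sm a (sm b f)) \<and>
     (\<forall>a b f. sm (a + b) f = sm a f + sm b f) \<and>
     (\<forall>a f g. sm a (f + g) = sm a f + sm a g) \<and>
     (\<forall>a f g. sm a (f * g) = sm a f * g) \<and>
     (\<forall>a f g. sm a (f * g) = f * sm a g)"

definition subalgebra :: "(complex \<Rightarrow> 'f::{ring,monoid_mult} \<Rightarrow> 'f) \<Rightarrow> 'f set \<Rightarrow> bool" where
  "subalgebra sm E \<longleftrightarrow> 0 \<in> E \<and>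
     (\<forall>e\<in>E. \<forall>e'\<in>E. e + e' \<in> E \<and> e * e' \<in> E) \<and>
     (\<forall>a. \<forall>e\<in>E. sm a e \<in> E)"

definition bounded_clinear_op :: "(complex \<Rightarrow> 'x::banach \<Rightarrow> 'x) \<Rightarrow> ('x \<Rightarrow> 'x) \<Rightarrow> bool" where
  "bounded_clinear_op sm T \<longleftrightarrow> bounded_linear T \<and> (\<forall>c x. T (sm c x) = sm c (T x))"

definition alg_hom_into_L ::
  "(complex \<Rightarrow> 'f::{ring,monoid_mult} \<Rightarrow> 'f) \<Rightarrow> (complex \<Rightarrow> 'x::banach \<Rightarrow> 'x)
     \<Rightarrow> 'f set \<Rightarrow> ('f \<Rightarrow> 'x \<Rightarrow> 'x) \<Rightarrow> bool" where
  "alg_hom_into_L smF smX E \<Phi> \<longleftrightarrow>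
     (\<forall>e\<in>E. bounded_clinear_op smX (\<Phi> e)) \<and>
     (\<forall>e\<in>E. \<forall>e'\<in>E. \<Phi> (e + e') = (\<lambda>x. \<Phi> e x + \<Phi> e' x)) \<and>
     (\<forall>a. \<forall>e\<in>E. \<Phi> (smF a e) = (\<lambda>x. smX a (\<Phi> e x))) \<and>
     (\<forall>e\<in>E. \<forall>e'\<in>E. \<Phi> (e * e') = \<Phi> e \<circ> \<Phi> e')"

definition anchor_set :: "'f::{ring,monoid_mult} set \<Rightarrow> 'f \<Rightarrow> 'f set" where
  "anchor_set E f = {e \<in> E. e * f \<in> E}"

definition anchored :: "'f::{ring,monoid_mult} set \<Rightarrow> ('f \<Rightarrow> 'x::banach \<Rightarrow> 'x) \<Rightarrow> 'f \<Rightarrow> bool" where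
  "anchored E \<Phi> f \<longleftrightarrow> anchor_set E f \<noteq> {} \<and>
     (\<Inter>e\<in>anchor_set E f. {x. \<Phi> e x = 0}) = {0}"

text \<open>Linear operators are represented by their graphs (subsets of X \<times> X);
operator inclusion is graph inclusion, sums and products have natural domains.\<close>

definition op_graph :: "('x \<Rightarrow> 'x) \<Rightarrow> ('x \<times> 'x) set" where
  "op_graph T = {(x, T x) | x. True}"

definition op_id :: "('x \<times> 'x) set" where
  "op_id = {(x, x) | x. True}"

definition op_scale :: "(complex \<Rightarrow> 'x \<Rightarrow> 'x) \<Rightarrow> complex \<Rightarrow> ('x \<times> 'x) set \<Rightarrow> ('x \<times> 'x) set" where
  "op_scale sm c A = {(x, sm c y) | x y. (x, y) \<in> A}"

definition op_add :: "('x::plus \<times> 'x) set \<Rightarrow> ('x \<times> 'x) set \<Rightarrow> ('x \<times> 'x) set" where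
  "op_add A B = {(x, y + z) | x y z. (x, y) \<in> A \<and> (x, z) \<in> B}"

text \<open>op_comp A B is the product A B (first B, then A).\<close>
definition op_comp :: "('x \<times> 'x) set \<Rightarrow> ('x \<times> 'x) set \<Rightarrow> ('x \<times> 'x) set" where
  "op_comp A B = {(x, z) | x z. \<exists>y. (x, y) \<in> B \<and> (y, z) \<in> A}"

definition closed_op :: "(complex \<Rightarrow> 'x::banach \<Rightarrow> 'x) \<Rightarrow> ('x \<times> 'x) set \<Rightarrow> bool" where
  "closed_op sm A \<longleftrightarrow>
     (\<forall>x y z. (x, y) \<in> A \<longrightarrow> (x, z) \<in> A \<longrightarrow> y = z) \<and>
     (0, 0) \<in> A \<and>
     (\<forall>x y x' y'. (x, y) \<in> A \<longrightarrow> (x', y') \<in> A \<longrightarrow> (x + x', y + y') \<in> A) \<and>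
     (\<forall>c x y. (x, y) \<in> A \<longrightarrow> (sm c x, sm c y) \<in> A) \<and>
     closed A"

definition is_bounded_op :: "(complex \<Rightarrow> 'x::banach \<Rightarrow> 'x) \<Rightarrow> ('x \<times> 'x) set \<Rightarrow> bool" where
  "is_bounded_op sm A \<longleftrightarrow> (\<exists>T. bounded_clinear_op sm T \<and> A = op_graph T)"

definition proto_calculus ::
  "(complex \<Rightarrow> 'f::{ring,monoid_mult} \<Rightarrow> 'f) \<Rightarrow> (complex \<Rightarrow> 'x::banach \<Rightarrow> 'x)
     \<Rightarrow> ('f \<Rightarrow> ('x \<times> 'x) set) \<Rightarrow> bool" where
  "proto_calculus smF smX \<Psi> \<longleftrightarrow>
     (\<forall>f. closed_op smX (\<Psi> f)) \<and>
     \<Psi> 1 = op_id \<and>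
     (\<forall>c f. op_scale smX c (\<Psi> f) \<subseteq> \<Psi> (smF c f)) \<and>
     (\<forall>f g. op_add (\<Psi> f) (\<Psi> g) \<subseteq> \<Psi> (f + g)) \<and>
     (\<forall>f g. op_comp (\<Psi> f) (\<Psi> g) \<subseteq> \<Psi> (f * g) \<and>
            Domain (op_comp (\<Psi> f) (\<Psi> g)) = Domain (\<Psi> g) \<inter> Domain (\<Psi> (f * g)))"

definition reg_set ::
  "(complex \<Rightarrow> 'x::banach \<Rightarrow> 'x) \<Rightarrow> ('f::{ring,monoid_mult} \<Rightarrow> ('x \<times> 'x) set) \<Rightarrow> 'f \<Rightarrow> 'f set" where
  "reg_set smX \<Psi> f = {e. is_bounded_op smX (\<Psi> e) \<and> is_bounded_op smX (\<Psi> (e * f))}"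

text \<open>"\<Psi>(ef)x = \<Psi>(e)y" means both sides are defined and equal.\<close>
definition calculus ::
  "(complex \<Rightarrow> 'f::{ring,monoid_mult} \<Rightarrow> 'f) \<Rightarrow> (complex \<Rightarrow> 'x::banach \<Rightarrow> 'x)
     \<Rightarrow> ('f \<Rightarrow> ('x \<times> 'x) set) \<Rightarrow> bool" where
  "calculus smF smX \<Psi> \<longleftrightarrow> proto_calculus smF smX \<Psi> \<and>
     (\<forall>f x y. (x, y) \<in> \<Psi> f \<longleftrightarrow>
        (\<forall>e \<in> reg_set smX \<Psi> f. \<exists>z. (x, z) \<in> \<Psi> (e * f) \<and> (y, z) \<in> \<Psi> e))"

end

theory Submission
  imports Defs
begin

locale cset =
  fixes smX :: "complex \<Rightarrow> 'x::banach \<Rightarrow> 'x"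
    and smF :: "complex \<Rightarrow> 'f::{ring,monoid_mult} \<Rightarrow> 'f"
    and E :: "'f set"
    and \<Phi> :: "'f \<Rightarrow> 'x \<Rightarrow> 'x"
  assumes cb: "complex_banach smX"
    and ca: "complex_algebra smF"
    and sa: "subalgebra smF E"
    and ah: "alg_hom_into_L smF smX E \<Phi>"
    and an: "\<forall>f. anchored E \<Phi> f"
begin

definition Psi :: "'f \<Rightarrow> ('x \<times> 'x) set" where
  "Psi f = {(x, y). \<forall>e\<in>anchor_set E f. \<Phi> (e * f) x = \<Phi> e y}"

lemma E0: "0 \<in> E" using sa by (simp add: subalgebra_def)
lemma Eadd: "e \<in> E \<Longrightarrow> e' \<in> E \<Longrightarrow> e + e' \<in> E" using sa by (simp add: subalgebra_def)
lemma Emul: "e \<in> E \<Longrightarrow> e' \<in> E \<Longrightarrow> e * e' \<in> E" using sa by (simp add: subalgebra_def)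
lemma Esm: "e \<in> E \<Longrightarrow> smF a e \<in> E" using sa by (simp add: subalgebra_def)

lemma smF0: "smF 0 f = 0"
proof -
  have "smF (0+0) f = smF 0 f + smF 0 f" using ca unfolding complex_algebra_def by blast
  then show ?thesis by simp
qed

lemma smFneg: "smF (-1) f = - f"
proof -
  have "smF (1 + -1) f = smF 1 f + smF (-1) f" using ca unfolding complex_algebra_def by blast
  moreover have "smF 1 f = f" using ca by (simp add: complex_algebra_def)
  ultimately have "0 = f + smF (-1) f" using smF0 by simp
  then show ?thesis by (metis add.commute add_eq_0_iff)
qed

lemma Ediff: "e \<in> E \<Longrightarrow> e' \<in> E \<Longrightarrow> e - e' \<in> E"
  using Eadd[of e "smF (-1) e'"] Esm[of e' "-1"] by (simp add: smFneg)

lemma smXsm: "smX (a * b) x = smX a (smX b x)" using cb by (simp add: complex_banach_def)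
lemma smX1: "smX 1 x = x"
  using cb unfolding complex_banach_def by (metis of_real_1 scaleR_one)
lemma smX0: "smX 0 x = 0"
  using cb unfolding complex_banach_def by (metis of_real_0 scaleR_zero_left)

lemma Phi_bl: "e \<in> E \<Longrightarrow> bounded_linear (\<Phi> e)"
  using ah by (simp add: alg_hom_into_L_def bounded_clinear_op_def)
lemma Phi_cl: "e \<in> E \<Longrightarrow> \<Phi> e (smX c x) = smX c (\<Phi> e x)"
  using ah by (simp add: alg_hom_into_L_def bounded_clinear_op_def)
lemma Phi_bop: "e \<in> E \<Longrightarrow> bounded_clinear_op smX (\<Phi> e)"
  using ah by (simp add: alg_hom_into_L_def)
lemma bop_E: "e \<in> E \<Longrightarrow> is_bounded_op smX (op_graph (\<Phi> e))"
  unfolding is_bounded_op_def using Phi_bop by blast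
lemma Phi_add: "e \<in> E \<Longrightarrow> e' \<in> E \<Longrightarrow> \<Phi> (e + e') x = \<Phi> e x + \<Phi> e' x"
  using ah by (simp add: alg_hom_into_L_def)
lemma Phi_mul: "e \<in> E \<Longrightarrow> e' \<in> E \<Longrightarrow> \<Phi> (e * e') x = \<Phi> e (\<Phi> e' x)"
  using ah by (simp add: alg_hom_into_L_def)
lemma Phi_sm: "e \<in> E \<Longrightarrow> \<Phi> (smF a e) x = smX a (\<Phi> e x)"
  using ah by (simp add: alg_hom_into_L_def)

lemma Phi_lin_diff: "e \<in> E \<Longrightarrow> \<Phi> e (x - y) = \<Phi> e x - \<Phi> e y"
  using Phi_bl by (simp add: linear_simps)
lemma Phi_lin_add: "e \<in> E \<Longrightarrow> \<Phi> e (x + y) = \<Phi> e x + \<Phi> e y"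
  using Phi_bl by (simp add: linear_simps)
lemma Phi_lin_0: "e \<in> E \<Longrightarrow> \<Phi> e 0 = 0"
  using Phi_bl by (simp add: linear_simps)

lemma Phi0: "\<Phi> 0 x = 0"
proof -
  have "\<Phi> (0 + 0) x = \<Phi> 0 x + \<Phi> 0 x" using Phi_add E0 by blast
  then show ?thesis by simp
qed

lemma anch: "(\<And>d. d \<in> anchor_set E g \<Longrightarrow> \<Phi> d v = 0) \<Longrightarrow> v = 0"
  using an unfolding anchored_def by blast

lemma anch_eq: "(\<And>d. d \<in> anchor_set E g \<Longrightarrow> \<Phi> d v = \<Phi> d w) \<Longrightarrow> v = w"
proof -
  assume h: "\<And>d. d \<in> anchor_set E g \<Longrightarrow> \<Phi> d v = \<Phi> d w"
  have "v - w = 0"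
    by (rule anch[of g]) (use h Phi_lin_diff in \<open>auto simp: anchor_set_def\<close>)
  then show ?thesis by simp
qed

lemma Psi_iff: "(x, y) \<in> Psi f \<longleftrightarrow> (\<forall>e\<in>anchor_set E f. \<Phi> (e * f) x = \<Phi> e y)"
  by (simp add: Psi_def)

lemma Psi_single: "(x, y) \<in> Psi f \<Longrightarrow> (x, z) \<in> Psi f \<Longrightarrow> y = z"
  by (rule anch_eq[of f]) (auto simp: Psi_iff)

lemma Psi_E: "e \<in> E \<Longrightarrow> Psi e = op_graph (\<Phi> e)"
proof -
  assume e: "e \<in> E"
  have g: "(x, \<Phi> e x) \<in> Psi e" for x
    using e by (auto simp: Psi_iff anchor_set_def Phi_mul)
  show ?thesis
  proof
    show "Psi e \<subseteq> op_graph (\<Phi> e)"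
      using g Psi_single unfolding op_graph_def by fastforce
    show "op_graph (\<Phi> e) \<subseteq> Psi e" using g unfolding op_graph_def by auto
  qed
qed

lemma Psi_comp: "(x, y) \<in> Psi g \<Longrightarrow> (y, z) \<in> Psi f \<Longrightarrow> (x, z) \<in> Psi (f * g)"
proof -
  assume xy: "(x, y) \<in> Psi g" and yz: "(y, z) \<in> Psi f"
  show ?thesis unfolding Psi_iff
  proof
    fix e assume "e \<in> anchor_set E (f * g)"
    then have e: "e \<in> E" "e * (f * g) \<in> E" by (auto simp: anchor_set_def)
    show "\<Phi> (e * (f * g)) x = \<Phi> e z"
    proof (rule anch_eq[of "e * f"])
      fix d assume "d \<in> anchor_set E (e * f)"
      then have d: "d \<in> E" "d * (e * f) \<in> E" by (auto simp: anchor_set_def)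
      have de: "d * e \<in> E" using d e Emul by blast
      have def': "d * e * f \<in> E" using d by (simp add: mult.assoc)
      have defg: "d * e * f * g \<in> E" using Emul[OF d(1) e(2)] by (simp add: mult.assoc)
      have "\<Phi> d (\<Phi> (e * (f * g)) x) = \<Phi> (d * e * f * g) x"
        using d e Phi_mul by (simp add: mult.assoc)
      also have "\<Phi> (d * e * f * g) x = \<Phi> (d * e * f) y"
        using xy def' defg by (auto simp: Psi_iff anchor_set_def)
      also have "\<Phi> (d * e * f) y = \<Phi> (d * e) z"
        using yz de def' by (auto simp: Psi_iff anchor_set_def)
      also have "\<Phi> (d * e) z = \<Phi> d (\<Phi> e z)" using d e Phi_mul by simp
      finally show "\<Phi> d (\<Phi> (e * (f * g)) x) = \<Phi> d (\<Phi> e z)" .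
    qed
  qed
qed

lemma Psi_add: "(x, y) \<in> Psi f \<Longrightarrow> (x, z) \<in> Psi g \<Longrightarrow> (x, y + z) \<in> Psi (f + g)"
proof -
  assume xy: "(x, y) \<in> Psi f" and xz: "(x, z) \<in> Psi g"
  show ?thesis unfolding Psi_iff
  proof
    fix e assume "e \<in> anchor_set E (f + g)"
    then have e: "e \<in> E" "e * (f + g) \<in> E" by (auto simp: anchor_set_def)
    show "\<Phi> (e * (f + g)) x = \<Phi> e (y + z)"
    proof (rule anch_eq[of "e * f"])
      fix d assume "d \<in> anchor_set E (e * f)"
      then have d: "d \<in> E" "d * (e * f) \<in> E" by (auto simp: anchor_set_def)
      have de: "d * e \<in> E" using d e Emul by blast
      have def': "d * e * f \<in> E" using d by (simp add: mult.assoc)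
      have defg: "d * e * (f + g) \<in> E" using Emul[OF d(1) e(2)] by (simp add: mult.assoc)
      have "d * e * g = d * e * (f + g) - d * e * f" by (simp add: algebra_simps)
      then have deg: "d * e * g \<in> E" using Ediff[OF defg def'] by simp
      have "\<Phi> d (\<Phi> (e * (f + g)) x) = \<Phi> (d * e * (f + g)) x"
        using d e Phi_mul by (simp add: mult.assoc)
      also have "d * e * (f + g) = d * e * f + d * e * g" by (simp add: algebra_simps)
      also have "\<Phi> (d * e * f + d * e * g) x = \<Phi> (d * e * f) x + \<Phi> (d * e * g) x"
        using Phi_add def' deg by simp
      also have "\<Phi> (d * e * f) x = \<Phi> (d * e) y"
        using xy de def' by (auto simp: Psi_iff anchor_set_def)
      also have "\<Phi> (d * e * g) x = \<Phi> (d * e) z"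
        using xz de deg by (auto simp: Psi_iff anchor_set_def)
      also have "\<Phi> (d * e) y + \<Phi> (d * e) z = \<Phi> d (\<Phi> e (y + z))"
        using d e de Phi_mul Phi_lin_add by simp
      finally show "\<Phi> d (\<Phi> (e * (f + g)) x) = \<Phi> d (\<Phi> e (y + z))" .
    qed
  qed
qed

lemma Psi_scale: "(x, y) \<in> Psi f \<Longrightarrow> (x, smX c y) \<in> Psi (smF c f)"
proof -
  assume xy: "(x, y) \<in> Psi f"
  show ?thesis unfolding Psi_iff
  proof
    fix e assume "e \<in> anchor_set E (smF c f)"
    then have e: "e \<in> E" "e * smF c f \<in> E" by (auto simp: anchor_set_def)
    have "smF c (e * f) = e * smF c f" using ca unfolding complex_algebra_def by blast
    then have eq: "e * smF c f = smF c (e * f)" by simp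
    show "\<Phi> (e * smF c f) x = \<Phi> e (smX c y)"
    proof (cases "c = 0")
      case True
      then show ?thesis using e smF0 smX0 Phi_lin_0 Phi0 by simp
    next
      case False
      have "smF (1/c) (smF c (e * f)) = e * f" using ca False
        unfolding complex_algebra_def by (metis nonzero_divide_eq_eq)
      then have ef: "e * f \<in> E" using Esm[of "e * smF c f" "1/c"] e eq by simp
      have "\<Phi> (e * smF c f) x = smX c (\<Phi> (e * f) x)" using eq Phi_sm ef by simp
      also have "\<Phi> (e * f) x = \<Phi> e y" using xy e ef by (auto simp: Psi_iff anchor_set_def)
      finally show ?thesis using Phi_cl e by simp
    qed
  qed
qed

lemma Psi_closed: "closed (Psi f)"
proof -
  have "Psi f = (\<Inter>e\<in>anchor_set E f. {p. \<Phi> (e * f) (fst p) = \<Phi> e (snd p)})"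
    by (auto simp: Psi_def)
  moreover have "closed {p. \<Phi> (e * f) (fst p) = \<Phi> e (snd p)}" if "e \<in> anchor_set E f" for e
  proof -
    have b: "bounded_linear (\<Phi> (e * f))" "bounded_linear (\<Phi> e)"
      using that Phi_bl by (auto simp: anchor_set_def)
    have "continuous_on UNIV (\<lambda>p. \<Phi> (e * f) (fst p))"
      by (rule continuous_on_compose2[OF linear_continuous_on[OF b(1)]]) (auto intro: continuous_intros)
    moreover have "continuous_on UNIV (\<lambda>p. \<Phi> e (snd p))"
      by (rule continuous_on_compose2[OF linear_continuous_on[OF b(2)]]) (auto intro: continuous_intros)
    ultimately show ?thesis by (rule closed_Collect_eq)
  qed
  ultimately show ?thesis by (auto intro: closed_INT)
qed

lemma Psi_closed_op: "closed_op smX (Psi f)"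
  unfolding closed_op_def
proof (intro conjI allI impI)
  show "(0, 0) \<in> Psi f" by (auto simp: Psi_iff anchor_set_def Phi_lin_0)
  show "closed (Psi f)" by (rule Psi_closed)
next
  fix x y z assume "(x, y) \<in> Psi f" "(x, z) \<in> Psi f" then show "y = z" by (rule Psi_single)
next
  fix x y x' y' assume "(x, y) \<in> Psi f" "(x', y') \<in> Psi f"
  then show "(x + x', y + y') \<in> Psi f" by (auto simp: Psi_iff anchor_set_def Phi_lin_add)
next
  fix c x y assume "(x, y) \<in> Psi f"
  then show "(smX c x, smX c y) \<in> Psi f" by (auto simp: Psi_iff anchor_set_def Phi_cl)
qed

lemma Psi_one: "Psi 1 = op_id"
proof
  show "op_id \<subseteq> Psi 1" by (auto simp: Psi_def op_id_def anchor_set_def)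
  show "Psi 1 \<subseteq> op_id"
  proof
    fix p assume p: "p \<in> Psi 1"
    obtain a b where ab: "p = (a, b)" by force
    have "a = b" by (rule anch_eq[of 1]) (use p ab in \<open>auto simp: Psi_iff anchor_set_def\<close>)
    then show "p \<in> op_id" using ab by (simp add: op_id_def)
  qed
qed

lemma Psi_proto: "proto_calculus smF smX Psi"
  unfolding proto_calculus_def
proof (intro conjI allI)
  fix f show "closed_op smX (Psi f)" by (rule Psi_closed_op)
next
  show "Psi 1 = op_id" by (rule Psi_one)
next
  fix c f show "op_scale smX c (Psi f) \<subseteq> Psi (smF c f)"
    unfolding op_scale_def using Psi_scale by auto
next
  fix f g show "op_add (Psi f) (Psi g) \<subseteq> Psi (f + g)"
    unfolding op_add_def using Psi_add by auto
next
  fix f g show "op_comp (Psi f) (Psi g) \<subseteq> Psi (f * g)"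
    unfolding op_comp_def using Psi_comp by auto
next
  fix f g
  show "Domain (op_comp (Psi f) (Psi g)) = Domain (Psi g) \<inter> Domain (Psi (f * g))"
  proof
    show "Domain (op_comp (Psi f) (Psi g)) \<subseteq> Domain (Psi g) \<inter> Domain (Psi (f * g))"
      unfolding op_comp_def using Psi_comp by blast
  next
    show "Domain (Psi g) \<inter> Domain (Psi (f * g)) \<subseteq> Domain (op_comp (Psi f) (Psi g))"
    proof
      fix x assume "x \<in> Domain (Psi g) \<inter> Domain (Psi (f * g))"
      then obtain y w where xy: "(x, y) \<in> Psi g" and xw: "(x, w) \<in> Psi (f * g)" by blast
      have "(y, w) \<in> Psi f" unfolding Psi_iff
      proof
        fix e assume "e \<in> anchor_set E f"
        then have e: "e \<in> E" "e * f \<in> E" by (auto simp: anchor_set_def)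
        show "\<Phi> (e * f) y = \<Phi> e w"
        proof (rule anch_eq[of "e * f * g"])
          fix d assume "d \<in> anchor_set E (e * f * g)"
          then have d: "d \<in> E" "d * (e * f * g) \<in> E" by (auto simp: anchor_set_def)
          have de: "d * e \<in> E" using d e Emul by blast
          have def': "d * e * f \<in> E" using d e Emul by (simp add: mult.assoc)
          have defg: "d * e * f * g \<in> E" using d by (simp add: mult.assoc)
          have "\<Phi> d (\<Phi> (e * f) y) = \<Phi> (d * e * f) y" using d e Phi_mul by (simp add: mult.assoc)
          also have "\<dots> = \<Phi> (d * e * f * g) x"
            using xy def' defg by (auto simp: Psi_iff anchor_set_def)
          also have "\<dots> = \<Phi> (d * e) w"
            using xw de defg by (auto simp: Psi_iff anchor_set_def mult.assoc)
          also have "\<dots> = \<Phi> d (\<Phi> e w)" using d e Phi_mul by simp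
          finally show "\<Phi> d (\<Phi> (e * f) y) = \<Phi> d (\<Phi> e w)" .
        qed
      qed
      then show "x \<in> Domain (op_comp (Psi f) (Psi g))"
        unfolding op_comp_def using xy by blast
    qed
  qed
qed

lemma Psi_calculus: "calculus smF smX Psi"
  unfolding calculus_def
proof (intro conjI allI)
  show "proto_calculus smF smX Psi" by (rule Psi_proto)
next
  fix f x y
  show "(x, y) \<in> Psi f \<longleftrightarrow> (\<forall>e \<in> reg_set smX Psi f. \<exists>z. (x, z) \<in> Psi (e * f) \<and> (y, z) \<in> Psi e)"
  proof
    assume xy: "(x, y) \<in> Psi f"
    show "\<forall>e \<in> reg_set smX Psi f. \<exists>z. (x, z) \<in> Psi (e * f) \<and> (y, z) \<in> Psi e"
    proof
      fix e assume "e \<in> reg_set smX Psi f"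
      then obtain T where T: "Psi e = op_graph T"
        by (auto simp: reg_set_def is_bounded_op_def)
      have yT: "(y, T y) \<in> Psi e" using T by (auto simp: op_graph_def)
      then have "(x, T y) \<in> Psi (e * f)" using Psi_comp xy by blast
      then show "\<exists>z. (x, z) \<in> Psi (e * f) \<and> (y, z) \<in> Psi e" using yT by blast
    qed
  next
    assume h: "\<forall>e \<in> reg_set smX Psi f. \<exists>z. (x, z) \<in> Psi (e * f) \<and> (y, z) \<in> Psi e"
    show "(x, y) \<in> Psi f" unfolding Psi_iff
    proof
      fix e assume "e \<in> anchor_set E f"
      then have e: "e \<in> E" "e * f \<in> E" by (auto simp: anchor_set_def)
      then have "e \<in> reg_set smX Psi f"
        by (simp add: reg_set_def Psi_E bop_E)
      then obtain z where "(x, z) \<in> Psi (e * f)" "(y, z) \<in> Psi e" using h by blast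
      then show "\<Phi> (e * f) x = \<Phi> e y" using e by (simp add: Psi_E op_graph_def)
    qed
  qed
qed

lemma op_graph_inj: "op_graph A = op_graph B \<Longrightarrow> A = B"
proof
  fix x assume h: "op_graph A = op_graph B"
  have "(x, A x) \<in> op_graph A" by (auto simp: op_graph_def)
  then have "(x, A x) \<in> op_graph B" using h by simp
  then show "A x = B x" by (auto simp: op_graph_def)
qed

lemma unique:
  assumes cal: "calculus smF smX \<Psi>'" and ag: "\<forall>e\<in>E. \<Psi>' e = op_graph (\<Phi> e)"
  shows "\<Psi>' = Psi"
proof (rule ext, rule set_eqI)
  fix f and p :: "'x \<times> 'x"
  obtain x y where pxy: "p = (x, y)" by force
  have pc: "proto_calculus smF smX \<Psi>'" using cal unfolding calculus_def by blast
  have cl: "(x, y) \<in> \<Psi>' f \<longleftrightarrow> (\<forall>e \<in> reg_set smX \<Psi>' f. \<exists>z. (x, z) \<in> \<Psi>' (e * f) \<and> (y, z) \<in> \<Psi>' e)"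
    using cal unfolding calculus_def by blast
  have sv: "b = c" if "(a, b) \<in> \<Psi>' g" "(a, c) \<in> \<Psi>' g" for g a b c
  proof -
    have "closed_op smX (\<Psi>' g)" using pc by (simp add: proto_calculus_def)
    then show ?thesis using that unfolding closed_op_def by blast
  qed
  show "p \<in> \<Psi>' f \<longleftrightarrow> p \<in> Psi f"
    unfolding pxy
  proof
    assume xy: "(x, y) \<in> \<Psi>' f"
    show "(x, y) \<in> Psi f" unfolding Psi_iff
    proof
      fix e assume "e \<in> anchor_set E f"
      then have e: "e \<in> E" "e * f \<in> E" by (auto simp: anchor_set_def)
      then have "e \<in> reg_set smX \<Psi>' f"
        using ag by (simp add: reg_set_def bop_E)
      then obtain z where "(x, z) \<in> \<Psi>' (e * f)" "(y, z) \<in> \<Psi>' e" using xy cl by blast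
      then show "\<Phi> (e * f) x = \<Phi> e y" using e ag by (simp add: op_graph_def)
    qed
  next
    assume xy: "(x, y) \<in> Psi f"
    show "(x, y) \<in> \<Psi>' f" unfolding cl
    proof
      fix e assume "e \<in> reg_set smX \<Psi>' f"
      then obtain T S where T: "\<Psi>' e = op_graph T" and S: "\<Psi>' (e * f) = op_graph S"
        by (auto simp: reg_set_def is_bounded_op_def)
      have comp: "\<Psi>' (d * g) = op_graph (\<Phi> d \<circ> R)" if d: "d \<in> E" and R: "\<Psi>' g = op_graph R" for d g R
      proof -
        have inc: "op_comp (\<Psi>' d) (\<Psi>' g) \<subseteq> \<Psi>' (d * g)"
          and dom: "Domain (op_comp (\<Psi>' d) (\<Psi>' g)) = Domain (\<Psi>' g) \<inter> Domain (\<Psi>' (d * g))"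
          using pc by (simp_all add: proto_calculus_def)
        have oc: "op_comp (\<Psi>' d) (\<Psi>' g) = op_graph (\<Phi> d \<circ> R)"
          using ag d R unfolding op_comp_def op_graph_def by auto
        show ?thesis
        proof
          show "op_graph (\<Phi> d \<circ> R) \<subseteq> \<Psi>' (d * g)" using inc oc by simp
          show "\<Psi>' (d * g) \<subseteq> op_graph (\<Phi> d \<circ> R)"
          proof
            fix p assume p: "p \<in> \<Psi>' (d * g)"
            obtain a b where ab: "p = (a, b)" by force
            have "(a, (\<Phi> d \<circ> R) a) \<in> \<Psi>' (d * g)" using inc oc by (auto simp: op_graph_def)
            then have "b = (\<Phi> d \<circ> R) a" using sv p ab by blast
            then show "p \<in> op_graph (\<Phi> d \<circ> R)" using ab by (simp add: op_graph_def)
          qed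
        qed
      qed
      have "S x = T y"
      proof -
        have key: "\<Phi> d (S x - T y) = 0"
          if d: "d \<in> E" "d * e \<in> E" "d * e * f \<in> E" for d
        proof -
          have "op_graph (\<Phi> d \<circ> T) = op_graph (\<Phi> (d * e))"
            using comp[OF d(1) T] ag d(2) by simp
          then have hT: "\<Phi> d (T y) = \<Phi> (d * e) y" by (metis op_graph_inj comp_apply)
          have "op_graph (\<Phi> d \<circ> S) = op_graph (\<Phi> (d * e * f))"
            using comp[OF d(1) S] ag d(3) by (simp add: mult.assoc)
          then have hS: "\<Phi> d (S x) = \<Phi> (d * e * f) x" by (metis op_graph_inj comp_apply)
          have "\<Phi> (d * e * f) x = \<Phi> (d * e) y" using xy d by (auto simp: Psi_iff anchor_set_def)
          then show ?thesis using hT hS Phi_lin_diff d by simp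
        qed
        show ?thesis
        proof -
          have "S x - T y = 0"
          proof (rule anch[of e])
            fix d1 assume "d1 \<in> anchor_set E e"
            then have d1: "d1 \<in> E" "d1 * e \<in> E" by (auto simp: anchor_set_def)
            show "\<Phi> d1 (S x - T y) = 0"
            proof (rule anch[of "d1 * e * f"])
              fix d2 assume "d2 \<in> anchor_set E (d1 * e * f)"
              then have d2: "d2 \<in> E" "d2 * (d1 * e * f) \<in> E" by (auto simp: anchor_set_def)
              have "\<Phi> (d2 * d1) (S x - T y) = 0"
                by (rule key) (use d1 d2 Emul in \<open>auto simp: mult.assoc\<close>)
              then show "\<Phi> d2 (\<Phi> d1 (S x - T y)) = 0" using Phi_mul d1 d2 by simp
            qed
          qed
          then show ?thesis by simp
        qed
      qed
      then show "\<exists>z. (x, z) \<in> \<Psi>' (e * f) \<and> (y, z) \<in> \<Psi>' e"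
        using S T by (auto simp: op_graph_def)
    qed
  qed
qed

end

theorem theorem6p1:
  fixes smX :: "complex \<Rightarrow> 'x::banach \<Rightarrow> 'x"
    and smF :: "complex \<Rightarrow> 'f::{ring,monoid_mult} \<Rightarrow> 'f"
    and E :: "'f set"
    and \<Phi> :: "'f \<Rightarrow> 'x \<Rightarrow> 'x"
  assumes "complex_banach smX"
    and "complex_algebra smF"
    and "subalgebra smF E"
    and "alg_hom_into_L smF smX E \<Phi>"
    and "\<forall>f. anchored E \<Phi> f"
  shows "\<exists>!\<Psi>. calculus smF smX \<Psi> \<and> (\<forall>e\<in>E. \<Psi> e = op_graph (\<Phi> e))"
proof -
  interpret cset smX smF E \<Phi> using assms by (unfold_locales)
  show ?thesis
  proof (rule ex1I[of _ Psi])
    show "calculus smF smX Psi \<and> (\<forall>e\<in>E. Psi e = op_graph (\<Phi> e))"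
      using Psi_calculus Psi_E by blast
    fix \<Psi>' assume "calculus smF smX \<Psi>' \<and> (\<forall>e\<in>E. \<Psi>' e = op_graph (\<Phi> e))"
    then show "\<Psi>' = Psi" using unique by blast
  qed
qed

end
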